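(* Let $\mathcal F\subseteq\mathcal O(A)$ be a conservative symmetric clone and $n\ge2$ a natural number. (1) If $\mathcal F$ contains an $n$-ary function $f$ that is not a projection but whose restriction to $A^n_{<n}$ coincides with the restriction of some projection $e^n_i$, then $\mathcal F$ satisfies $\Delta^s_n$. (2) If $\mathcal F$ contains a $\partial$-function, then $\mathcal F$ satisfies $\Delta^\partial$. (3) If $\mathcal F$ contains an $\ell$-function, then $\mathcal F$ satisfies $\Delta^s_3$.
   Context: $\mathcal O(A)=\bigcup_{n<\omega}A^{A^n}$; $\mathcal F_{[n]}=\mathcal F\cap A^{A^n}$; $S_A$ the permutations of $A$. Elements of $A^n$ are $\mathbf x=x_0\dots x_{n-1}$, $\mathrm{ran}\,\mathbf x$ the set of entries, $A^n_k=\{\mathbf x:|\mathrm{ran}\,\mathbf x|=k\}$, $A^n_{<n}=\bigcup_{k<n}A^n_k$; projections $e^n_i(\mathbf x)=x_i$. A clone with carrier $A$ is a subset of $\mathcal O(A)$ containing all projections and closed under composition; conservative if $f(\mathbf a)\in\mathrm{ran}\,\mathbf a$ for all members; symmetric if $f_\sigma(\mathbf a)=\sigma^{-1}(f(\sigma(\mathbf a)))$ is a member for each member $f$ and $\sigma\in S_A$. A $\partial$-function is $\partial\in\mathcal O(A)_{[3]}$ with $\partial(xxy)=\partial(xyx)=\partial(yxx)=x$ for all $x,y\in A$; an $\ell$-function is $\ell\in\mathcal O(A)_{[3]}$ with $\ell(x,y,y)=\ell(y,x,y)=\ell(y,y,x)=x$ for all $x,y\in A$. $\Delta^s_n$: there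 is $i<n$ such that for every $\mathbf a\in A^n_n$ and $a\in\mathrm{ran}\,\mathbf a$ there is $s\in\mathcal F_{[n]}$ with $s(\mathbf a)=a$ and $s(\mathbf x)=x_i$ for all $\mathbf x\in A^n_{<n}$. $\Delta^\partial$: for every $\mathbf a\in A^3_3$ and $a\in\mathrm{ran}\,\mathbf a$ there is a $\partial$-function $\partial\in\mathcal F$ with $\partial(\mathbf a)=a$. *)

theory Defs
  imports Main
begin

text \<open>An n-ary operation on the carrier A is represented as a pair (n, f) with
 f :: 'a list => 'a; tuples of A^n are lists of length n over A.\<close>

type_synonym 'a op = "nat \<times> ('a list \<Rightarrow> 'a)"

definition tuples :: "'a set \<Rightarrow> nat \<Rightarrow> 'a list set" where
  "tuples A n = {xs. length xs = n \<and> set xs \<subseteq> A}"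

definition ops :: "'a set \<Rightarrow> 'a op set" where
  "ops A = {(n, f). (\<forall>xs \<in> tuples A n. f xs \<in> A) \<and> (\<forall>xs. xs \<notin> tuples A n \<longrightarrow> f xs = undefined)}"

definition proj :: "'a set \<Rightarrow> nat \<Rightarrow> nat \<Rightarrow> 'a op" where
  "proj A n i = (n, \<lambda>xs. if xs \<in> tuples A n then xs ! i else undefined)"

definition compose :: "'a set \<Rightarrow> ('a list \<Rightarrow> 'a) \<Rightarrow> ('a list \<Rightarrow> 'a) list \<Rightarrow> nat \<Rightarrow> 'a op" where
  "compose A f gs m = (m, \<lambda>xs. if xs \<in> tuples A m then f (map (\<lambda>g. g xs) gs) else undefined)"

definition is_clone :: "'a set \<Rightarrow> 'a op set \<Rightarrow> bool" where
  "is_clone A F \<longleftrightarrow> F \<subseteq> ops A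
     \<and> (\<forall>n i. i < n \<longrightarrow> proj A n i \<in> F)
     \<and> (\<forall>n f gs m. (n, f) \<in> F \<and> length gs = n \<and> (\<forall>g \<in> set gs. (m, g) \<in> F)
            \<longrightarrow> compose A f gs m \<in> F)"

definition conservative :: "'a set \<Rightarrow> 'a op set \<Rightarrow> bool" where
  "conservative A F \<longleftrightarrow> (\<forall>(n, f) \<in> F. \<forall>xs \<in> tuples A n. f xs \<in> set xs)"

definition conj_op :: "'a set \<Rightarrow> ('a \<Rightarrow> 'a) \<Rightarrow> 'a op \<Rightarrow> 'a op" where
  "conj_op A \<sigma> F = (fst F, \<lambda>xs. if xs \<in> tuples A (fst F)
      then inv_into A \<sigma> (snd F (map \<sigma> xs)) else undefined)"

definition symmetric :: "'a set \<Rightarrow> 'a op set \<Rightarrow> bool" where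
  "symmetric A F \<longleftrightarrow> (\<forall>h \<in> F. \<forall>\<sigma>. bij_betw \<sigma> A A \<longrightarrow> conj_op A \<sigma> h \<in> F)"

definition tuples_k :: "'a set \<Rightarrow> nat \<Rightarrow> nat \<Rightarrow> 'a list set" where
  "tuples_k A n k = {xs \<in> tuples A n. card (set xs) = k}"

definition tuples_lt :: "'a set \<Rightarrow> nat \<Rightarrow> 'a list set" where
  "tuples_lt A n = {xs \<in> tuples A n. card (set xs) < n}"

definition Delta_s :: "'a set \<Rightarrow> 'a op set \<Rightarrow> nat \<Rightarrow> bool" where
  "Delta_s A F n \<longleftrightarrow> (\<exists>i < n. \<forall>a \<in> tuples_k A n n. \<forall>x \<in> set a.
      \<exists>s. (n, s) \<in> F \<and> s a = x \<and> (\<forall>xs \<in> tuples_lt A n. s xs = xs ! i))"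

definition is_partial_fn :: "'a set \<Rightarrow> 'a op \<Rightarrow> bool" where
  "is_partial_fn A h \<longleftrightarrow> h \<in> ops A \<and> fst h = 3 \<and>
     (\<forall>x \<in> A. \<forall>y \<in> A. snd h [x, x, y] = x \<and> snd h [x, y, x] = x \<and> snd h [y, x, x] = x)"

definition is_ell_fn :: "'a set \<Rightarrow> 'a op \<Rightarrow> bool" where
  "is_ell_fn A h \<longleftrightarrow> h \<in> ops A \<and> fst h = 3 \<and>
     (\<forall>x \<in> A. \<forall>y \<in> A. snd h [x, y, y] = x \<and> snd h [y, x, y] = x \<and> snd h [y, y, x] = x)"

definition Delta_partial :: "'a set \<Rightarrow> 'a op set \<Rightarrow> bool" where
  "Delta_partial A F \<longleftrightarrow> (\<forall>a \<in> tuples_k A 3 3. \<forall>x \<in> set a.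
      \<exists>d \<in> F. is_partial_fn A d \<and> snd d a = x)"

end

theory Submission
  imports Defs
begin


definition swp :: "'b \<Rightarrow> 'b \<Rightarrow> 'b \<Rightarrow> 'b" where
  "swp a b z = (if z = a then b else if z = b then a else z)"

lemma swp_bij:
  assumes "a \<in> A" "b \<in> A" shows "bij_betw (swp a b) A A"
  by (rule bij_betw_byWitness[where f'="swp a b"]) (auto simp: swp_def assms)

lemma perm_exists:
  "distinct c \<Longrightarrow> distinct b \<Longrightarrow> length c = length b \<Longrightarrow> set c \<subseteq> A \<Longrightarrow> set b \<subseteq> A
   \<Longrightarrow> \<exists>\<sigma>. bij_betw \<sigma> A A \<and> map \<sigma> c = b"
proof (induction c arbitrary: b)
  case Nil then show ?case by (auto intro: bij_betw_id)
next
  case (Cons x c b)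
  then obtain y b' where b: "b = y # b'" by (cases b) auto
  from Cons.IH[of b'] Cons.prems b obtain \<sigma>' where s: "bij_betw \<sigma>' A A" "map \<sigma>' c = b'" by auto
  have xA: "x \<in> A" "y \<in> A" using Cons.prems b by auto
  have sx: "\<sigma>' x \<in> A" using s(1) xA bij_betwE by blast
  define \<sigma> where "\<sigma> = swp y (\<sigma>' x) \<circ> \<sigma>'"
  have "bij_betw \<sigma> A A" unfolding \<sigma>_def by (rule bij_betw_trans[OF s(1) swp_bij[OF xA(2) sx]])
  moreover have "\<forall>z \<in> set c. \<sigma> z = \<sigma>' z"
  proof
    fix z assume z: "z \<in> set c"
    have "\<sigma>' z \<in> set b'" using z s(2) by force
    hence "\<sigma>' z \<noteq> y" using Cons.prems b by auto
    moreover have "\<sigma>' z \<noteq> \<sigma>' x" using z Cons.prems s(1) unfolding bij_betw_def inj_on_def by auto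
    ultimately show "\<sigma> z = \<sigma>' z" by (simp add: \<sigma>_def swp_def)
  qed
  then have "map \<sigma> c = b'" using s(2) by (metis map_eq_conv)
  moreover have "\<sigma> x = y" by (simp add: \<sigma>_def swp_def)
  ultimately show ?case using b by auto
qed

lemma proj_in:
  assumes "is_clone A F" "i < n" shows "(n, snd (proj A n i)) \<in> F"
proof -
  have "proj A n i = (n, snd (proj A n i))" by (simp add: proj_def)
  then show ?thesis using assms unfolding is_clone_def by metis
qed

lemma perm_comp:
  assumes cl: "is_clone A F" and s: "(n, s) \<in> F" and pi: "\<forall>m<n. \<pi> m < n"
  shows "(n, \<lambda>xs. if xs \<in> tuples A n then s (map (\<lambda>m. xs ! \<pi> m) [0..<n]) else undefined) \<in> F"
proof -
  let ?gs = "map (\<lambda>m. snd (proj A n (\<pi> m))) [0..<n]"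
  have "\<forall>g \<in> set ?gs. (n, g) \<in> F" using proj_in[OF cl] pi by auto
  then have "compose A s ?gs n \<in> F" using cl s unfolding is_clone_def by auto
  moreover have "compose A s ?gs n = (n, \<lambda>xs. if xs \<in> tuples A n then s (map (\<lambda>m. xs ! \<pi> m) [0..<n]) else undefined)"
    unfolding compose_def by (auto simp: proj_def o_def intro!: arg_cong[where f=s])
  ultimately show ?thesis by simp
qed

lemma perm_tuples:
  assumes "xs \<in> tuples A n" "\<forall>m<n. \<pi> m < n"
  shows "map (\<lambda>m. xs ! \<pi> m) [0..<n] \<in> tuples A n"
    and "set (map (\<lambda>m. xs ! \<pi> m) [0..<n]) \<subseteq> set xs"
  using assms by (auto simp: tuples_def)

lemma map_tuples:
  assumes "bij_betw \<sigma> A A" "xs \<in> tuples A n"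
  shows "map \<sigma> xs \<in> tuples A n" "card (set (map \<sigma> xs)) = card (set xs)"
proof -
  show "map \<sigma> xs \<in> tuples A n" using assms bij_betwE by (fastforce simp: tuples_def)
  have "inj_on \<sigma> (set xs)" using assms unfolding tuples_def bij_betw_def by (auto intro: inj_on_subset)
  then show "card (set (map \<sigma> xs)) = card (set xs)" by (simp add: card_image)
qed

lemma conj_in:
  assumes "symmetric A F" "(n, f) \<in> F" "bij_betw \<sigma> A A"
  shows "(n, snd (conj_op A \<sigma> (n, f))) \<in> F"
proof -
  have "conj_op A \<sigma> (n, f) = (n, snd (conj_op A \<sigma> (n, f)))" by (simp add: conj_op_def)
  then show ?thesis using assms unfolding symmetric_def by metis
qed

lemma conj_eval:
  "xs \<in> tuples A n \<Longrightarrow> snd (conj_op A \<sigma> (n, f)) xs = inv_into A \<sigma> (f (map \<sigma> xs))"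
  by (simp add: conj_op_def)

lemma inv_sig: "bij_betw \<sigma> A A \<Longrightarrow> y \<in> A \<Longrightarrow> inv_into A \<sigma> (\<sigma> y) = y"
  by (simp add: bij_betw_def inv_into_f_f)

lemma tk_distinct: "a \<in> tuples_k A n n \<Longrightarrow> distinct a \<and> a \<in> tuples A n"
  unfolding tuples_k_def tuples_def by (auto intro: card_distinct)



lemma core:
  assumes cl: "is_clone A F" and co: "conservative A F" and sy: "symmetric A F"
  and fF: "(n, f) \<in> F" and i: "i < n" and lt: "\<forall>xs \<in> tuples_lt A n. f xs = xs ! i"
  and b: "b \<in> tuples_k A n n" and fb: "f b \<noteq> b ! i"
  shows "Delta_s A F n"
  unfolding Delta_s_def
proof (intro exI[of _ i] conjI ballI i)
  fix a x assume a: "a \<in> tuples_k A n n" and x: "x \<in> set a"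
  have bt: "distinct b" "b \<in> tuples A n" using tk_distinct[OF b] by auto
  have at: "distinct a" "a \<in> tuples A n" using tk_distinct[OF a] by auto
  have "f b \<in> set b" using co fF bt(2) unfolding conservative_def by auto
  then obtain j where j: "j < n" "f b = b ! j" using bt(2) by (auto simp: in_set_conv_nth tuples_def)
  have ji: "j \<noteq> i" using fb j by auto
  obtain k where k: "k < n" "x = a ! k" using x at(2) by (auto simp: in_set_conv_nth tuples_def)
  show "\<exists>s. (n, s) \<in> F \<and> s a = x \<and> (\<forall>xs\<in>tuples_lt A n. s xs = xs ! i)"
  proof (cases "k = i")
    case True
    show ?thesis
      by (rule exI[of _ "snd (proj A n i)"]) (use proj_in[OF cl i] True k at in \<open>auto simp: proj_def tuples_lt_def\<close>)
  next
    case False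
    define \<pi> where "\<pi> = swp j k"
    have pi: "\<pi> i = i" "\<pi> j = k" "\<forall>m<n. \<pi> m < n" using False ji j k by (auto simp: \<pi>_def swp_def)
    have piinj: "inj \<pi>" unfolding \<pi>_def inj_def swp_def by auto
    define c where "c = map (\<lambda>m. a ! \<pi> m) [0..<n]"
    have ct: "c \<in> tuples A n" using perm_tuples[OF at(2) pi(3)] c_def by simp
    have "inj_on (\<lambda>m. a ! \<pi> m) (set [0..<n])"
    proof (rule inj_onI)
      fix m1 m2 assume "m1 \<in> set [0..<n]" "m2 \<in> set [0..<n]" "a ! \<pi> m1 = a ! \<pi> m2"
      moreover have "\<pi> m1 < length a" "\<pi> m2 < length a" using \<open>m1 \<in> set [0..<n]\<close> \<open>m2 \<in> set [0..<n]\<close> at(2) pi(3) by (auto simp: tuples_def)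
      ultimately have "\<pi> m1 = \<pi> m2" using nth_eq_iff_index_eq[OF at(1)] by blast
      then show "m1 = m2" using piinj by (simp add: inj_def)
    qed
    then have cd: "distinct c" unfolding c_def by (simp add: distinct_map)
    obtain \<sigma> where sg: "bij_betw \<sigma> A A" "map \<sigma> c = b"
      using perm_exists[OF cd bt(1)] ct bt(2) by (auto simp: tuples_def)
    define d where "d = snd (conj_op A \<sigma> (n, f))"
    have dF: "(n, d) \<in> F" using conj_in[OF sy fF sg(1)] d_def by simp
    have "c ! j \<in> A" using ct j by (auto simp: tuples_def)
    have bj: "b ! j = \<sigma> (c ! j)" using j ct unfolding sg(2)[symmetric] by (simp add: tuples_def)
    have "d c = inv_into A \<sigma> (f b)" using conj_eval[OF ct] sg d_def by simp
    also have "\<dots> = inv_into A \<sigma> (\<sigma> (c ! j))" using j(2) bj by simp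
    also have "\<dots> = c ! j" using inv_sig[OF sg(1) \<open>c ! j \<in> A\<close>] .
    also have "\<dots> = x" using c_def j pi k by simp
    finally have dc: "d c = x" .
    have dlt: "d xs = xs ! i" if xs: "xs \<in> tuples_lt A n" for xs
    proof -
      have xt: "xs \<in> tuples A n" using xs by (simp add: tuples_lt_def)
      have "map \<sigma> xs \<in> tuples_lt A n" using map_tuples[OF sg(1) xt] xs by (simp add: tuples_lt_def)
      then have "f (map \<sigma> xs) = \<sigma> (xs ! i)" using lt i xt by (simp add: tuples_def)
      moreover have "xs ! i \<in> A" using xt i by (auto simp: tuples_def)
      ultimately show ?thesis using conj_eval[OF xt] d_def inv_sig[OF sg(1)] by simp
    qed
    let ?g = "\<lambda>xs. if xs \<in> tuples A n then d (map (\<lambda>m. xs ! \<pi> m) [0..<n]) else undefined"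
    have gF: "(n, ?g) \<in> F" using perm_comp[OF cl dF pi(3)] .
    have "?g a = x" using at(2) dc c_def by simp
    moreover have "?g xs = xs ! i" if xs: "xs \<in> tuples_lt A n" for xs
    proof -
      have xt: "xs \<in> tuples A n" using xs by (simp add: tuples_lt_def)
      let ?ys = "map (\<lambda>m. xs ! \<pi> m) [0..<n]"
      have "card (set ?ys) \<le> card (set xs)" using perm_tuples(2)[OF xt pi(3)] by (simp add: card_mono)
      then have "?ys \<in> tuples_lt A n" using perm_tuples(1)[OF xt pi(3)] xs by (simp add: tuples_lt_def)
      then have "d ?ys = ?ys ! i" using dlt by blast
      then show ?thesis using xt i pi(1) by simp
    qed
    ultimately show ?thesis using gF by blast
  qed
qed



lemma comp3:
  assumes "is_clone A F" "(3, f) \<in> F" "(m, g0) \<in> F" "(m, g1) \<in> F" "(m, g2) \<in> F"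
  shows "compose A f [g0, g1, g2] m \<in> F"
proof -
  have "length [g0, g1, g2] = 3" by simp
  then show ?thesis using assms unfolding is_clone_def by (metis empty_iff insert_iff list.set(1) list.set(2))
qed

lemma part1:
  assumes cl: "is_clone A F" and co: "conservative A F" and sy: "symmetric A F"
  and fF: "(n, f) \<in> F" and np: "\<forall>j < n. (n, f) \<noteq> proj A n j" and i: "i < n"
  and lt: "\<forall>xs \<in> tuples_lt A n. f xs = xs ! i"
  shows "Delta_s A F n"
proof -
  have "\<exists>b \<in> tuples_k A n n. f b \<noteq> b ! i"
  proof (rule ccontr)
    assume "\<not> ?thesis"
    then have all: "\<forall>b \<in> tuples_k A n n. f b = b ! i" by auto
    have "f = snd (proj A n i)"
    proof
      fix xs
      show "f xs = snd (proj A n i) xs"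
      proof (cases "xs \<in> tuples A n")
        case True
        have "card (set xs) \<le> n" using True card_length by (auto simp: tuples_def)
        then have "xs \<in> tuples_lt A n \<or> xs \<in> tuples_k A n n" using True
          by (auto simp: tuples_lt_def tuples_k_def)
        then show ?thesis using all lt True by (auto simp: proj_def)
      next
        case False
        have "(n, f) \<in> ops A" using cl fF unfolding is_clone_def by auto
        then show ?thesis using False by (simp add: ops_def proj_def)
      qed
    qed
    then have "(n, f) = proj A n i" by (simp add: proj_def)
    then show False using np i by auto
  qed
  then obtain b where "b \<in> tuples_k A n n" "f b \<noteq> b ! i" by auto
  then show ?thesis using core[OF cl co sy fF i lt] by blast
qed

lemma part3:
  assumes cl: "is_clone A F" and co: "conservative A F" and sy: "symmetric A F"
  and lF: "l \<in> F" and ell: "is_ell_fn A l"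
  shows "Delta_s A F 3"
proof (cases "tuples_k A 3 3 = {}")
  case True then show ?thesis unfolding Delta_s_def by (intro exI[of _ 0]) auto
next
  case False
  then obtain a where a: "a \<in> tuples_k A 3 3" by auto
  obtain lf where l: "l = (3, lf)" using ell by (cases l) (auto simp: is_ell_fn_def)
  have lfF: "(3, lf) \<in> F" using lF l by simp
  have lo: "(3, lf) \<in> ops A" using cl lfF unfolding is_clone_def by auto
  have ls: "\<And>x y. x \<in> A \<Longrightarrow> y \<in> A \<Longrightarrow> lf [x, y, y] = x \<and> lf [y, x, y] = x \<and> lf [y, y, x] = x"
    using ell l by (auto simp: is_ell_fn_def)
  have lA: "\<And>xs. xs \<in> tuples A 3 \<Longrightarrow> lf xs \<in> A" using lo by (auto simp: ops_def)
  have lc: "\<And>xs. xs \<in> tuples A 3 \<Longrightarrow> lf xs \<in> set xs" using co lfF by (auto simp: conservative_def)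
  have t3: "\<And>xs. xs \<in> tuples A 3 \<longleftrightarrow> (\<exists>x y z. xs = [x, y, z] \<and> x \<in> A \<and> y \<in> A \<and> z \<in> A)"
    by (auto simp: tuples_def numeral_3_eq_3 length_Suc_conv)
  define p where "p k = snd (proj A 3 k)" for k
  have pF: "\<And>k. k < 3 \<Longrightarrow> (3, p k) \<in> F" using proj_in[OF cl] p_def by auto
  define s0 where "s0 = snd (compose A lf [snd (compose A lf [p 0, p 1, p 2] 3), p 1, p 2] 3)"
  define s1 where "s1 = snd (compose A lf [p 0, snd (compose A lf [p 0, p 1, p 2] 3), p 2] 3)"
  have cF: "compose A lf [p 0, p 1, p 2] 3 \<in> F" using comp3[OF cl lfF pF pF pF] by simp
  have cF': "(3, snd (compose A lf [p 0, p 1, p 2] 3)) \<in> F"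
    using cF by (simp add: compose_def)
  have s0F: "(3, s0) \<in> F"
  proof -
    have "compose A lf [snd (compose A lf [p 0, p 1, p 2] 3), p 1, p 2] 3 \<in> F"
      using comp3[OF cl lfF] pF cF' by simp
    then show ?thesis by (simp add: compose_def s0_def)
  qed
  have s1F: "(3, s1) \<in> F"
  proof -
    have "compose A lf [p 0, snd (compose A lf [p 0, p 1, p 2] 3), p 2] 3 \<in> F"
      using comp3[OF cl lfF] pF cF' by simp
    then show ?thesis by (simp add: compose_def s1_def)
  qed
  have s0e: "\<And>x y z. x \<in> A \<Longrightarrow> y \<in> A \<Longrightarrow> z \<in> A \<Longrightarrow> s0 [x, y, z] = lf [lf [x, y, z], y, z]"
    by (simp add: s0_def compose_def p_def proj_def tuples_def)
  have s1e: "\<And>x y z. x \<in> A \<Longrightarrow> y \<in> A \<Longrightarrow> z \<in> A \<Longrightarrow> s1 [x, y, z] = lf [x, lf [x, y, z], z]"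
    by (simp add: s1_def compose_def p_def proj_def tuples_def)
  have lt3: "\<And>xs. xs \<in> tuples_lt A 3 \<longleftrightarrow> (\<exists>x y z. xs = [x, y, z] \<and> x \<in> A \<and> y \<in> A \<and> z \<in> A \<and> (x = y \<or> y = z \<or> x = z))"
  proof -
    fix xs
    show "xs \<in> tuples_lt A 3 \<longleftrightarrow> (\<exists>x y z. xs = [x, y, z] \<and> x \<in> A \<and> y \<in> A \<and> z \<in> A \<and> (x = y \<or> y = z \<or> x = z))"
      unfolding tuples_lt_def using t3 by (auto simp: card_insert_if split: if_splits)
  qed
  have s0lt: "\<forall>xs \<in> tuples_lt A 3. s0 xs = xs ! 0"
  proof
    fix xs assume "xs \<in> tuples_lt A 3"
    then obtain x y z where xs: "xs = [x, y, z]" "x \<in> A" "y \<in> A" "z \<in> A" "x = y \<or> y = z \<or> x = z"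
      using lt3 by blast
    show "s0 xs = xs ! 0" using xs s0e ls by auto
  qed
  have s1lt: "\<forall>xs \<in> tuples_lt A 3. s1 xs = xs ! 1"
  proof
    fix xs assume "xs \<in> tuples_lt A 3"
    then obtain x y z where xs: "xs = [x, y, z]" "x \<in> A" "y \<in> A" "z \<in> A" "x = y \<or> y = z \<or> x = z"
      using lt3 by blast
    show "s1 xs = xs ! 1" using xs s1e ls by auto
  qed
  obtain x y z where a3: "a = [x, y, z]" "x \<in> A" "y \<in> A" "z \<in> A" "x \<noteq> y" "y \<noteq> z" "x \<noteq> z"
  proof -
    have "a \<in> tuples A 3" "distinct a" using tk_distinct[OF a] by auto
    then show ?thesis using that t3 by auto
  qed
  show ?thesis
  proof (cases "s0 a = a ! 0")
    case False
    show ?thesis by (rule core[OF cl co sy s0F _ s0lt a False]) simp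
  next
    case True
    have xyz: "[x, y, z] \<in> tuples A 3" using a3 t3 by blast
    have "lf a \<in> set a" using lc[OF xyz] a3(1) by simp
    then have "lf [x, y, z] = x" using True a3 s0e ls by auto
    then have "s1 a = z" using a3 s1e ls by auto
    then have "s1 a \<noteq> a ! 1" using a3 by auto
    then show ?thesis using core[OF cl co sy s1F _ s1lt a] by simp
  qed
qed



lemma part2:
  assumes cl: "is_clone A F" and co: "conservative A F" and sy: "symmetric A F"
  and dF0: "d0 \<in> F" and dp: "is_partial_fn A d0"
  shows "Delta_partial A F"
  unfolding Delta_partial_def
proof (intro ballI)
  fix a x assume a: "a \<in> tuples_k A 3 3" and x: "x \<in> set a"
  obtain df where d0: "d0 = (3, df)" using dp by (cases d0) (auto simp: is_partial_fn_def)
  have dF: "(3, df) \<in> F" using dF0 d0 by simp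
  have dps: "\<And>x y. x \<in> A \<Longrightarrow> y \<in> A \<Longrightarrow> df [x, x, y] = x \<and> df [x, y, x] = x \<and> df [y, x, x] = x"
    using dp d0 by (auto simp: is_partial_fn_def)
  have at: "distinct a" "a \<in> tuples A 3" using tk_distinct[OF a] by auto
  have "df a \<in> set a" using co dF at(2) unfolding conservative_def by auto
  then obtain j where j: "j < 3" "df a = a ! j" using at(2) by (auto simp: in_set_conv_nth tuples_def)
  obtain k where k: "k < 3" "x = a ! k" using x at(2) by (auto simp: in_set_conv_nth tuples_def)
  define \<pi> where "\<pi> = swp j k"
  have pi: "\<pi> j = k" "\<forall>m<3. \<pi> m < 3" using j k by (auto simp: \<pi>_def swp_def)
  have piinj: "inj \<pi>" unfolding \<pi>_def inj_def swp_def by auto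
  define c where "c = map (\<lambda>m. a ! \<pi> m) [0..<3]"
  have ct: "c \<in> tuples A 3" using perm_tuples[OF at(2) pi(2)] c_def by simp
  have "inj_on (\<lambda>m. a ! \<pi> m) (set [0..<3])"
  proof (rule inj_onI)
    fix m1 m2 assume "m1 \<in> set [0..<3]" "m2 \<in> set [0..<3]" "a ! \<pi> m1 = a ! \<pi> m2"
    moreover have "\<pi> m1 < length a" "\<pi> m2 < length a" using \<open>m1 \<in> set [0..<3]\<close> \<open>m2 \<in> set [0..<3]\<close> at(2) pi(2) by (auto simp: tuples_def)
    ultimately have "\<pi> m1 = \<pi> m2" using nth_eq_iff_index_eq[OF at(1)] by blast
    then show "m1 = m2" using piinj by (simp add: inj_def)
  qed
  then have cd: "distinct c" unfolding c_def by (simp add: distinct_map)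
  obtain \<sigma> where sg: "bij_betw \<sigma> A A" "map \<sigma> c = a"
    using perm_exists[OF cd at(1)] ct at(2) by (auto simp: tuples_def)
  define d where "d = snd (conj_op A \<sigma> (3, df))"
  have dF': "(3, d) \<in> F" using conj_in[OF sy dF sg(1)] d_def by simp
  have cjA: "c ! j \<in> A" using ct j by (auto simp: tuples_def)
  have aj: "a ! j = \<sigma> (c ! j)" using j ct unfolding sg(2)[symmetric] by (simp add: tuples_def)
  have "d c = inv_into A \<sigma> (df a)" using conj_eval[OF ct] sg d_def by simp
  also have "\<dots> = inv_into A \<sigma> (\<sigma> (c ! j))" using j(2) aj by simp
  also have "\<dots> = c ! j" using inv_sig[OF sg(1) cjA] .
  also have "\<dots> = x" using c_def j pi k by simp
  finally have dc: "d c = x" .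
  have sA: "\<And>u. u \<in> A \<Longrightarrow> \<sigma> u \<in> A" using sg(1) bij_betwE by blast
  have dps': "d [u, u, v] = u \<and> d [u, v, u] = u \<and> d [v, u, u] = u" if "u \<in> A" "v \<in> A" for u v
  proof -
    have "[u, u, v] \<in> tuples A 3" "[u, v, u] \<in> tuples A 3" "[v, u, u] \<in> tuples A 3"
      using that by (auto simp: tuples_def numeral_3_eq_3)
    then show ?thesis using conj_eval[of _ A 3 \<sigma> df] d_def dps[OF sA[OF that(1)] sA[OF that(2)]]
      inv_sig[OF sg(1) that(1)] by simp
  qed
  let ?g = "\<lambda>xs. if xs \<in> tuples A 3 then d (map (\<lambda>m. xs ! \<pi> m) [0..<3]) else undefined"
  have gF: "(3, ?g) \<in> F" using perm_comp[OF cl dF' pi(2)] .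
  have "?g a = x" using at(2) dc c_def by simp
  moreover have "is_partial_fn A (3, ?g)"
  proof -
    have "(3, ?g) \<in> ops A" using gF cl unfolding is_clone_def by auto
    moreover have "?g [u, u, v] = u \<and> ?g [u, v, u] = u \<and> ?g [v, u, u] = u" if "u \<in> A" "v \<in> A" for u v
    proof -
      have u3: "[0..<3] = [0::nat, 1, 2]" by (simp add: upt_rec)
      have t: "[u, u, v] \<in> tuples A 3" "[u, v, u] \<in> tuples A 3" "[v, u, u] \<in> tuples A 3"
        using that by (auto simp: tuples_def numeral_3_eq_3)
      have jj: "j = 0 \<or> j = 1 \<or> j = 2" "k = 0 \<or> k = 1 \<or> k = 2" using j k by auto
      show ?thesis using t jj dps'[OF that] unfolding u3 \<pi>_def swp_def by auto
    qed
    ultimately show ?thesis unfolding is_partial_fn_def by auto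
  qed
  ultimately show "\<exists>d\<in>F. is_partial_fn A d \<and> snd d a = x" using gF by force
qed


theorem mainTheorem17:
  fixes A :: "'a set" and F :: "'a op set" and n :: nat
  assumes "is_clone A F" and "conservative A F" and "symmetric A F" and "n \<ge> 2"
  shows "((\<exists>f i. (n, f) \<in> F \<and> (\<forall>j < n. (n, f) \<noteq> proj A n j) \<and> i < n \<and>
             (\<forall>xs \<in> tuples_lt A n. f xs = xs ! i)) \<longrightarrow> Delta_s A F n)
       \<and> ((\<exists>d \<in> F. is_partial_fn A d) \<longrightarrow> Delta_partial A F)
       \<and> ((\<exists>l \<in> F. is_ell_fn A l) \<longrightarrow> Delta_s A F 3)"
  using part1[OF assms(1,2,3)] part2[OF assms(1,2,3)] part3[OF assms(1,2,3)] by blast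

end
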